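(* Let $\mathcal M$ be a local Moufang set with basis $(0,\infty)$ and little projective group $G$, and let $\tau=\mu_e$ for some unit $e$. Then $G=U_0HU_\infty\,\cup\,U_0H\tau U_0^\circ$. Consequently the stabilizer of $0$ in $G$ is $G_0=U_0H$, and the stabilizer of both $0$ and $\infty$ is $G_{0,\infty}=H$.
   Context: Group actions are right actions, written $xg$; conjugation is $g^h=h^{-1}gh$. For a set $X$ with an equivalence relation $\sim$, $\overline{x}$ denotes the class of $x$, $\overline X$ the set of classes, and $\mathrm{Sym}(X,\sim)$ the group of bijections $g$ of $X$ with $x\sim y\iff xg\sim yg$; each such $g$ induces a permutation $\overline g$ of $\overline X$, and for a subgroup $U\le \mathrm{Sym}(X,\sim)$, $\overline U$ is the induced group of permutations of $\overline X$. A local Moufang set consists of a set with equivalence relation $(X,\sim)$ with $|\overline X|>2$ and, for each $x\in X$, a subgroup (root group) $U_x\le\mathrm{Sym}(X,\sim)$ such that: (LM0) if $x\sim y$ then $\overline{U_x}=\overline{U_y}$; (LM1) $U_x$ fixes $x$ and acts sharply transitively on $X\setminus\overline x$; (LM1') $\overline{U_x}$ fixes $\overline x$ and acts sharply transitively on $\overline X\setminus\{\overline x\}$; (LM2) $U_x^g=U_{xg}$ for all $x\in X$ and all $g$ in the little projective group $G:=\langle U_x\mid x\in X\rangle$. A basis is a fixed pair $(0,\infty)$ with $0\not\sim\infty$. For $x\not\sim\infty$, $\alpha_x$ is the unique element of $U_\infty$ with $0\alpha_x=x$. A unit is $x\in X$ with $x\not\sim0$, $x\not\sim\infty$; for a unit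 $x$, $\mu_x$ is the unique element of $U_0\alpha_xU_0$ interchanging $0$ and $\infty$. The Hua subgroup is $H:=\langle\mu_x\mu_y\mid x,y\text{ units}\rangle$. $U_0^\circ:=\{u\in U_0\mid \overline u=\mathrm{id}_{\overline X}\}$. *)

theory Defs
  imports Main
begin

text \<open>The set X is the universe of the type 'a; permutations are
functions 'a \<Rightarrow> 'a. Groups act on the right: x(gh) = (xg)h, so the product
gh of permutations is the function h \<circ> g.\<close>

definition pmul :: "('a \<Rightarrow> 'a) \<Rightarrow> ('a \<Rightarrow> 'a) \<Rightarrow> ('a \<Rightarrow> 'a)" where
  "pmul g h = h \<circ> g"

definition setmul :: "('a \<Rightarrow> 'a) set \<Rightarrow> ('a \<Rightarrow> 'a) set \<Rightarrow> ('a \<Rightarrow> 'a) set" where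
  "setmul A B = {pmul a b | a b. a \<in> A \<and> b \<in> B}"

definition SymE :: "('a \<Rightarrow> 'a \<Rightarrow> bool) \<Rightarrow> ('a \<Rightarrow> 'a) set" where
  "SymE E = {g. bij g \<and> (\<forall>x y. E x y \<longleftrightarrow> E (g x) (g y))}"

definition cls :: "('a \<Rightarrow> 'a \<Rightarrow> bool) \<Rightarrow> 'a \<Rightarrow> 'a set" where
  "cls E x = {y. E x y}"

definition classes :: "('a \<Rightarrow> 'a \<Rightarrow> bool) \<Rightarrow> 'a set set" where
  "classes E = range (cls E)"

definition ind :: "('a \<Rightarrow> 'a \<Rightarrow> bool) \<Rightarrow> ('a \<Rightarrow> 'a) \<Rightarrow> ('a set \<Rightarrow> 'a set)" where
  "ind E g = (\<lambda>C. if C \<in> classes E then g ` C else C)"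

definition is_subgroup :: "('a \<Rightarrow> 'a) set \<Rightarrow> bool" where
  "is_subgroup U \<longleftrightarrow> (\<forall>g\<in>U. bij g) \<and> id \<in> U \<and> (\<forall>g\<in>U. \<forall>h\<in>U. pmul g h \<in> U)
     \<and> (\<forall>g\<in>U. inv g \<in> U)"

inductive_set gen_group :: "('a \<Rightarrow> 'a) set \<Rightarrow> ('a \<Rightarrow> 'a) set" for S where
  gen_id: "id \<in> gen_group S"
| gen_elem: "g \<in> S \<Longrightarrow> g \<in> gen_group S"
| gen_inv: "g \<in> S \<Longrightarrow> inv g \<in> gen_group S"
| gen_mul: "g \<in> gen_group S \<Longrightarrow> h \<in> gen_group S \<Longrightarrow> pmul g h \<in> gen_group S"

definition littleG :: "('a \<Rightarrow> ('a \<Rightarrow> 'a) set) \<Rightarrow> ('a \<Rightarrow> 'a) set" where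
  "littleG U = gen_group (\<Union>x. U x)"

text \<open>Conjugation u^g = g^{-1} u g (right action), i.e. the function g \<circ> u \<circ> g^{-1}.\<close>
definition conj :: "('a \<Rightarrow> 'a) \<Rightarrow> ('a \<Rightarrow> 'a) \<Rightarrow> ('a \<Rightarrow> 'a)" where
  "conj u g = pmul (pmul (inv g) u) g"

definition local_moufang_set :: "('a \<Rightarrow> 'a \<Rightarrow> bool) \<Rightarrow> ('a \<Rightarrow> ('a \<Rightarrow> 'a) set) \<Rightarrow> bool" where
  "local_moufang_set E U \<longleftrightarrow>
     equivp E
   \<and> (\<exists>a b c. \<not> E a b \<and> \<not> E a c \<and> \<not> E b c)
   \<and> (\<forall>x. is_subgroup (U x) \<and> U x \<subseteq> SymE E)
   \<comment> \<open>LM0\<close>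
   \<and> (\<forall>x y. E x y \<longrightarrow> ind E ` U x = ind E ` U y)
   \<comment> \<open>LM1\<close>
   \<and> (\<forall>x. (\<forall>u\<in>U x. u x = x)
         \<and> (\<forall>y z. \<not> E x y \<longrightarrow> \<not> E x z \<longrightarrow> (\<exists>!u. u \<in> U x \<and> u y = z)))
   \<comment> \<open>LM1'\<close>
   \<and> (\<forall>x. (\<forall>p\<in>ind E ` U x. p (cls E x) = cls E x)
         \<and> (\<forall>C\<in>classes E. \<forall>D\<in>classes E. C \<noteq> cls E x \<longrightarrow> D \<noteq> cls E x \<longrightarrow>
              (\<exists>!p. p \<in> ind E ` U x \<and> p C = D)))
   \<comment> \<open>LM2\<close>
   \<and> (\<forall>x. \<forall>g\<in>littleG U. U (g x) = (\<lambda>u. conj u g) ` U x)"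

definition alpha :: "('a \<Rightarrow> ('a \<Rightarrow> 'a) set) \<Rightarrow> 'a \<Rightarrow> 'a \<Rightarrow> 'a \<Rightarrow> ('a \<Rightarrow> 'a)" where
  "alpha U zero infty x = (THE u. u \<in> U infty \<and> u zero = x)"

definition is_unit :: "('a \<Rightarrow> 'a \<Rightarrow> bool) \<Rightarrow> 'a \<Rightarrow> 'a \<Rightarrow> 'a \<Rightarrow> bool" where
  "is_unit E zero infty x \<longleftrightarrow> \<not> E x zero \<and> \<not> E x infty"

definition mu :: "('a \<Rightarrow> ('a \<Rightarrow> 'a) set) \<Rightarrow> 'a \<Rightarrow> 'a \<Rightarrow> 'a \<Rightarrow> ('a \<Rightarrow> 'a)" where
  "mu U zero infty x = (THE m. m \<in> setmul (setmul (U zero) {alpha U zero infty x}) (U zero)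
                         \<and> m zero = infty \<and> m infty = zero)"

definition Hua :: "('a \<Rightarrow> 'a \<Rightarrow> bool) \<Rightarrow> ('a \<Rightarrow> ('a \<Rightarrow> 'a) set) \<Rightarrow> 'a \<Rightarrow> 'a \<Rightarrow> ('a \<Rightarrow> 'a) set" where
  "Hua E U zero infty = gen_group {pmul (mu U zero infty x) (mu U zero infty y) | x y.
        is_unit E zero infty x \<and> is_unit E zero infty y}"

definition Ucirc :: "('a \<Rightarrow> 'a \<Rightarrow> bool) \<Rightarrow> ('a \<Rightarrow> ('a \<Rightarrow> 'a) set) \<Rightarrow> 'a \<Rightarrow> ('a \<Rightarrow> 'a) set" where
  "Ucirc E U zero = {u \<in> U zero. ind E u = id}"

end

theory Submission
  imports Defs
begin

lemma setmul_iff: "g \<in> setmul A B \<longleftrightarrow> (\<exists>a\<in>A. \<exists>b\<in>B. g = b \<circ> a)"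
  by (auto simp: setmul_def pmul_def)

lemma bij_inv_l: "bij f \<Longrightarrow> inv f (f x) = x" by (simp add: bij_is_inj)
lemma bij_inv_r: "bij f \<Longrightarrow> f (inv f x) = x" by (simp add: bij_is_surj surj_f_inv_f)

lemma gen_group_bij:
  assumes "\<forall>g\<in>S. bij g" "g \<in> gen_group S" shows "bij g"
  using assms(2)
proof induct
  case gen_id show ?case by (rule bij_id)
next
  case (gen_elem g) then show ?case using assms(1) by blast
next
  case (gen_inv g) then show ?case using assms(1) bij_imp_bij_inv by blast
next
  case (gen_mul g h) then show ?case unfolding pmul_def using bij_comp by blast
qed

lemma gen_group_inv:
  assumes "\<forall>g\<in>S. bij g" "g \<in> gen_group S" shows "inv g \<in> gen_group S"
  using assms(2)
proof induct
  case gen_id then show ?case by (metis inv_id gen_group.gen_id)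
next
  case (gen_elem g) then show ?case by (rule gen_group.gen_inv)
next
  case (gen_inv g) then show ?case using assms(1) by (simp add: inv_inv_eq gen_group.gen_elem)
next
  case (gen_mul g h)
  have "bij g" "bij h" using gen_mul assms gen_group_bij by blast+
  then have "inv (pmul g h) = pmul (inv h) (inv g)" by (simp add: pmul_def o_inv_distrib)
  then show ?case using gen_mul by (simp add: gen_group.gen_mul)
qed

locale LMS =
  fixes E :: "'a \<Rightarrow> 'a \<Rightarrow> bool" and U :: "'a \<Rightarrow> ('a \<Rightarrow> 'a) set" and z i e :: 'a
  assumes lms: "local_moufang_set E U" and nzi: "\<not> E z i" and unite: "is_unit E z i e"
begin

abbreviation "G \<equiv> littleG U"
abbreviation "H \<equiv> Hua E U z i"
abbreviation "\<mu> \<equiv> mu U z i"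
abbreviation "\<alpha> \<equiv> alpha U z i"
abbreviation "\<tau> \<equiv> mu U z i e"
abbreviation "uni x \<equiv> is_unit E z i x"

lemma eqv: "equivp E" using lms[unfolded local_moufang_set_def, THEN conjunct1] .
lemma L_sub: "\<forall>x. is_subgroup (U x) \<and> U x \<subseteq> SymE E" using lms[unfolded local_moufang_set_def, THEN conjunct2, THEN conjunct2, THEN conjunct1] .
lemma L_lm1: "\<forall>x. (\<forall>u\<in>U x. u x = x) \<and> (\<forall>y z. \<not> E x y \<longrightarrow> \<not> E x z \<longrightarrow> (\<exists>!u. u \<in> U x \<and> u y = z))" using lms[unfolded local_moufang_set_def, THEN conjunct2, THEN conjunct2, THEN conjunct2, THEN conjunct2, THEN conjunct1] .
lemma L_lm2: "\<forall>x. \<forall>g\<in>littleG U. U (g x) = (\<lambda>u. conj u g) ` U x" using lms[unfolded local_moufang_set_def, THEN conjunct2, THEN conjunct2, THEN conjunct2, THEN conjunct2, THEN conjunct2, THEN conjunct2] .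
lemma Erefl[simp]: "E x x" using eqv equivp_reflp by metis
lemma Esym: "E x y \<Longrightarrow> E y x" using eqv equivp_symp by metis
lemma Etrans: "E x y \<Longrightarrow> E y w \<Longrightarrow> E x w" using eqv equivp_transp by metis
lemma Usub: "is_subgroup (U x)" using L_sub by blast
lemma USym: "U x \<subseteq> SymE E" using L_sub by blast
lemma U_bij: "u \<in> U x \<Longrightarrow> bij u" using Usub unfolding is_subgroup_def by blast
lemma U_E: "u \<in> U x \<Longrightarrow> E a b \<longleftrightarrow> E (u a) (u b)" using USym unfolding SymE_def by blast
lemma U_id[simp]: "id \<in> U x" using Usub unfolding is_subgroup_def by blast
lemma U_comp: "u \<in> U x \<Longrightarrow> v \<in> U x \<Longrightarrow> v \<circ> u \<in> U x"
  using Usub unfolding is_subgroup_def pmul_def by blast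
lemma U_inv: "u \<in> U x \<Longrightarrow> inv u \<in> U x" using Usub unfolding is_subgroup_def by blast
lemma U_fix: "u \<in> U x \<Longrightarrow> u x = x" using L_lm1 by blast
lemma U_tr: "\<not> E x y \<Longrightarrow> \<not> E x w \<Longrightarrow> \<exists>!u. u \<in> U x \<and> u y = w"
  using L_lm1[THEN spec[of _ x], THEN conjunct2, rule_format] by blast
lemma U_uniq: assumes "\<not> E x y" "u \<in> U x" "u' \<in> U x" "u y = u' y" shows "u = u'"
proof -
  have nx: "\<not> E x (u y)" using U_E[OF assms(2), of x y] U_fix[OF assms(2)] assms(1) by simp
  have ex1: "\<exists>!w. w \<in> U x \<and> w y = u y" using U_tr[OF assms(1) nx] .
  have 1: "(THE w. w \<in> U x \<and> w y = u y) = u" by (rule the1_equality[OF ex1]) (simp add: assms(2))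
  have 2: "(THE w. w \<in> U x \<and> w y = u y) = u'" by (rule the1_equality[OF ex1]) (simp add: assms(3,4))
  show ?thesis using 1 2 by simp
qed
lemma LM1': "\<forall>C\<in>classes E. \<forall>D\<in>classes E. C \<noteq> cls E x \<longrightarrow> D \<noteq> cls E x \<longrightarrow>
              (\<exists>!p. p \<in> ind E ` U x \<and> p C = D)"
  using lms[unfolded local_moufang_set_def, THEN conjunct2, THEN conjunct2, THEN conjunct2,
      THEN conjunct2, THEN conjunct2, THEN conjunct1, THEN spec[of _ x], THEN conjunct2] .
lemma LM2: "g \<in> G \<Longrightarrow> U (g x) = (\<lambda>u. conj u g) ` U x"
  using L_lm2 by blast

lemma gens_bij: "\<forall>g\<in>(\<Union>x. U x). bij g" using U_bij by blast
lemma G_U: "u \<in> U x \<Longrightarrow> u \<in> G" unfolding littleG_def by (auto intro: gen_group.gen_elem)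
lemma G_comp: "g \<in> G \<Longrightarrow> h \<in> G \<Longrightarrow> h \<circ> g \<in> G"
  unfolding littleG_def using gen_group.gen_mul[of g _ h] pmul_def by metis
lemma G_inv: "g \<in> G \<Longrightarrow> inv g \<in> G" unfolding littleG_def using gen_group_inv gens_bij by blast
lemma G_bij: "g \<in> G \<Longrightarrow> bij g" unfolding littleG_def using gen_group_bij gens_bij by blast
lemma G_E': assumes "g \<in> G" shows "\<forall>a b. E a b \<longleftrightarrow> E (g a) (g b)"
  using assms unfolding littleG_def
proof induct
  case gen_id show ?case by simp
next
  case (gen_elem g) then show ?case using U_E by blast
next
  case (gen_inv g) then obtain x where gx: "g \<in> U x" by blast
  hence bg: "bij g" using U_bij by blast
  show ?case proof (intro allI) fix a b
    have "E (inv g a) (inv g b) \<longleftrightarrow> E (g (inv g a)) (g (inv g b))" using U_E gx by blast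
    then show "E a b \<longleftrightarrow> E (inv g a) (inv g b)" using bg by (simp add: bij_inv_r)
  qed
next
  case (gen_mul g h) then show ?case by (simp add: pmul_def)
qed
lemma G_E: "g \<in> G \<Longrightarrow> E a b \<longleftrightarrow> E (g a) (g b)" using G_E' by blast

lemma conjU: "g \<in> G \<Longrightarrow> u \<in> U x \<Longrightarrow> g \<circ> u \<circ> inv g \<in> U (g x)"
  using LM2[of g x] by (auto simp: conj_def pmul_def comp_assoc)
lemma conjU2: "g \<in> G \<Longrightarrow> g x = y \<Longrightarrow> u \<in> U x \<Longrightarrow> g \<circ> u \<circ> inv g \<in> U y"
  using conjU by blast
lemma conjU3: assumes "g \<in> G" "g y = x" "u \<in> U x" shows "inv g \<circ> u \<circ> g \<in> U y"
proof -
  have b: "bij g" using G_bij assms by blast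
  have "inv g x = y" using assms(2) b bij_inv_l by metis
  then have "inv g \<circ> u \<circ> inv (inv g) \<in> U y" using conjU2 G_inv assms by blast
  then show ?thesis using b by (simp add: inv_inv_eq)
qed

lemma alpha_spec: assumes "\<not> E x i" shows "\<alpha> x \<in> U i \<and> \<alpha> x z = x"
proof -
  have "\<not> E i z" "\<not> E i x" using nzi assms Esym by blast+
  then have "\<exists>!u. u \<in> U i \<and> u z = x" using U_tr by blast
  then show ?thesis unfolding alpha_def by (rule theI')
qed

lemma alpha_eq: assumes "v \<in> U i" shows "\<alpha> (v z) = v"
proof -
  have iz: "\<not> E i z" using nzi Esym by blast
  have "\<not> E i (v z)" using U_E[OF assms, of i z] U_fix[OF assms] iz by simp
  then show ?thesis unfolding alpha_def using U_tr[OF iz] assms by (intro the1_equality) auto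
qed

lemma iz: "\<not> E i z" using nzi Esym by blast

lemma mu_ex: assumes "uni x"
  shows "\<exists>a b. a \<in> U z \<and> b \<in> U z \<and> \<mu> x = b \<circ> \<alpha> x \<circ> a \<and> \<mu> x z = i \<and> \<mu> x i = z"
proof -
  from assms have xz: "\<not> E x z" and xi: "\<not> E x i" by (auto simp: is_unit_def)
  define A where "A = \<alpha> x"
  have A: "A \<in> U i" "A z = x" using alpha_spec[OF xi] A_def by auto
  have Ab: "bij A" using A U_bij by blast
  have zx: "\<not> E z x" using xz Esym by blast
  obtain b where b: "b \<in> U z" "b x = i" using U_tr[OF zx nzi] by blast
  have bb: "bij b" using b U_bij by blast
  define y where "y = inv A z"
  have Ay: "A y = z" using Ab y_def bij_inv_r by metis
  have zy: "\<not> E z y" proof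
    assume "E z y" then have "E (A z) (A y)" using U_E A(1) by blast
    thus False using A Ay xz by simp
  qed
  obtain a where a: "a \<in> U z" "a i = y" using U_tr[OF nzi zy] by blast
  define m where "m = b \<circ> A \<circ> a"
  have mz: "m z = i" using U_fix[OF a(1)] A b by (simp add: m_def)
  have mi: "m i = z" using a Ay U_fix[OF b(1)] by (simp add: m_def)
  have c: "A \<circ> a \<in> setmul (U z) {A}" using a(1) by (auto simp: setmul_iff)
  have "m = b \<circ> (A \<circ> a)" by (simp add: m_def comp_assoc)
  then have mem: "m \<in> setmul (setmul (U z) {A}) (U z)" using c b(1) setmul_iff by blast
  have uniq: "m' = m" if HH: "m' \<in> setmul (setmul (U z) {A}) (U z) \<and> m' z = i \<and> m' i = z" for m'
  proof -
    have "m' \<in> setmul (setmul (U z) {A}) (U z)" using HH by blast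
    then obtain c b' where c: "c \<in> setmul (U z) {A}" and b': "b' \<in> U z" and m': "m' = b' \<circ> c"
      unfolding setmul_iff[of m'] by blast
    obtain a' where a': "a' \<in> U z" and c': "c = A \<circ> a'" using c unfolding setmul_iff[of c] by blast
    have "b' x = i" using HH m' c' U_fix[OF a'] A by simp
    hence bb': "b' = b" using U_uniq[OF zx b' b(1)] b(2) by simp
    have "b (A (a' i)) = b z" using HH m' c' bb' U_fix[OF b(1)] by simp
    hence "A (a' i) = z" using bb by (metis bij_inv_l)
    hence "a' i = y" using y_def Ab bij_inv_l by metis
    hence "a' = a" using U_uniq[OF nzi a' a(1)] a(2) by simp
    thus ?thesis using m' c' bb' m_def by (simp add: comp_assoc)
  qed
  have P: "m \<in> setmul (setmul (U z) {A}) (U z) \<and> m z = i \<and> m i = z" using mem mz mi by blast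
  have "\<mu> x = m" unfolding mu_def A_def[symmetric]
  proof (rule the_equality)
    show "m \<in> setmul (setmul (U z) {A}) (U z) \<and> m z = i \<and> m i = z" by (rule P)
  next
    fix m' assume "m' \<in> setmul (setmul (U z) {A}) (U z) \<and> m' z = i \<and> m' i = z"
    then show "m' = m" by (rule uniq)
  qed
  then have "\<mu> x = b \<circ> \<alpha> x \<circ> a \<and> \<mu> x z = i \<and> \<mu> x i = z" using m_def A_def mz mi by simp
  note HH = this
  show ?thesis
  proof (intro exI conjI)
    show "a \<in> U z" by (rule a(1))
    show "b \<in> U z" by (rule b(1))
    show "\<mu> x = b \<circ> \<alpha> x \<circ> a" by (rule HH[THEN conjunct1])
    show "\<mu> x z = i" by (rule HH[THEN conjunct2, THEN conjunct1])
    show "\<mu> x i = z" by (rule HH[THEN conjunct2, THEN conjunct2])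
  qed
qed

lemma mu_swap: "uni x \<Longrightarrow> \<mu> x z = i \<and> \<mu> x i = z" using mu_ex by blast
lemma mu_G: assumes "uni x" shows "\<mu> x \<in> G"
proof -
  obtain a b where ab: "a \<in> U z" "b \<in> U z" "\<mu> x = b \<circ> \<alpha> x \<circ> a" using mu_ex[OF assms] by blast
  have "\<alpha> x \<in> U i" using alpha_spec assms by (auto simp: is_unit_def)
  then show ?thesis using ab G_U G_comp by metis
qed
lemma mu_bij: "uni x \<Longrightarrow> bij (\<mu> x)" using mu_G G_bij by blast

lemma mu_dec: assumes "v \<in> U i" "v z = x" "\<not> E x z"
  shows "\<exists>a b. a \<in> U z \<and> b \<in> U z \<and> v = b \<circ> \<mu> x \<circ> a"
proof -
  have "\<not> E x i" using U_E[OF assms(1), of z i] U_fix[OF assms(1)] nzi assms(2) by simp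
  hence u: "uni x" using assms(3) by (simp add: is_unit_def)
  obtain a b where ab: "a \<in> U z" "b \<in> U z" "\<mu> x = b \<circ> \<alpha> x \<circ> a" using mu_ex[OF u] by blast
  have A: "\<alpha> x = v" using alpha_eq assms by blast
  have ba: "bij a" "bij b" using ab U_bij by blast+
  have "v = inv b \<circ> \<mu> x \<circ> inv a" using ab(3) A ba by (simp add: fun_eq_iff bij_inv_l bij_inv_r)
  then show ?thesis using ab U_inv by blast
qed

lemma H_gen: "uni x \<Longrightarrow> uni y \<Longrightarrow> \<mu> y \<circ> \<mu> x \<in> H"
  unfolding Hua_def pmul_def by (rule gen_group.gen_elem) blast
lemma Hgens_bij: "\<forall>g\<in>{pmul (\<mu> x) (\<mu> y) | x y. uni x \<and> uni y}. bij g"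
  using mu_bij by (auto simp: pmul_def intro: bij_comp)
lemma H_inv: "h \<in> H \<Longrightarrow> inv h \<in> H" unfolding Hua_def using gen_group_inv Hgens_bij by blast
lemma H_comp: assumes "h \<in> H" "g \<in> H" shows "g \<circ> h \<in> H"
proof -
  have "pmul h g \<in> H" using assms unfolding Hua_def by (rule gen_group.gen_mul)
  then show ?thesis by (simp add: pmul_def)
qed
lemma H_id: "id \<in> H" unfolding Hua_def by (rule gen_group.gen_id)
lemma H_G: assumes "h \<in> H" shows "h \<in> G"
  using assms unfolding Hua_def
proof induct
  case gen_id then show ?case unfolding littleG_def by (rule gen_group.gen_id)
next
  case (gen_elem g) then show ?case using mu_G G_comp by (auto simp: pmul_def)
next
  case (gen_inv g) then show ?case using mu_G G_comp G_inv by (auto simp: pmul_def)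
next
  case (gen_mul g h) then show ?case unfolding pmul_def using G_comp by blast
qed
lemma H_fix': assumes "h \<in> H" shows "h z = z \<and> h i = i"
  using assms unfolding Hua_def
proof induct
  case gen_id then show ?case by simp
next
  case (gen_elem g) then show ?case using mu_swap by (auto simp: pmul_def)
next
  case (gen_inv g)
  then obtain x y where g: "g = \<mu> y \<circ> \<mu> x" "uni x" "uni y" by (auto simp: pmul_def)
  then have "g z = z" "g i = i" using mu_swap by auto
  moreover have "bij g" using g bij_comp[OF mu_bij[OF g(2)] mu_bij[OF g(3)]] by simp
  ultimately show ?case by (metis bij_inv_l)
next
  case (gen_mul g h) then show ?case by (simp add: pmul_def)
qed
lemma H_fix: "h \<in> H \<Longrightarrow> h z = z" "h \<in> H \<Longrightarrow> h i = i" using H_fix' by auto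
lemma H_bij: "h \<in> H \<Longrightarrow> bij h" using H_G G_bij by blast

lemma tau_G: "\<tau> \<in> G" using mu_G unite by blast
lemma tau_bij: "bij \<tau>" using mu_bij unite by blast
lemma tau_z: "\<tau> z = i" and tau_i: "\<tau> i = z" using mu_swap unite by auto
lemma tau_sq: "\<tau> \<circ> \<tau> \<in> H" using H_gen unite by blast
lemma tau_mu_H: assumes "uni x" shows "inv \<tau> \<circ> \<mu> x \<in> H"
proof -
  have "\<tau> \<circ> \<mu> x \<in> H" using H_gen unite assms by blast
  moreover have "inv (\<tau> \<circ> \<tau>) \<in> H" using H_inv tau_sq by blast
  moreover have "inv \<tau> \<circ> \<mu> x = inv (\<tau> \<circ> \<tau>) \<circ> (\<tau> \<circ> \<mu> x)"
    using tau_bij by (simp add: o_inv_distrib fun_eq_iff bij_inv_l)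
  ultimately show ?thesis using H_comp by metis
qed
lemma H_normU: "h \<in> H \<Longrightarrow> a \<in> U z \<Longrightarrow> inv h \<circ> a \<circ> h \<in> U z"
  using conjU3 H_G H_fix by blast

definition inB where "inB g \<longleftrightarrow> (\<exists>a\<in>U z. \<exists>h\<in>H. g = h \<circ> a)"
definition S1 where "S1 g \<longleftrightarrow> (\<exists>b v. inB b \<and> v \<in> U i \<and> g = v \<circ> b)"
definition S2 where "S2 g \<longleftrightarrow> (\<exists>b w. inB b \<and> w \<in> Ucirc E U z \<and> g = w \<circ> \<tau> \<circ> b)"
definition inS where "inS g \<longleftrightarrow> S1 g \<or> S2 g"

lemma B_comp: assumes "inB b1" "inB b2" shows "inB (b2 \<circ> b1)"
proof -
  obtain a1 h1 where 1: "a1 \<in> U z" "h1 \<in> H" "b1 = h1 \<circ> a1" using assms(1) inB_def by blast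
  obtain a2 h2 where 2: "a2 \<in> U z" "h2 \<in> H" "b2 = h2 \<circ> a2" using assms(2) inB_def by blast
  have "(inv h1 \<circ> a2 \<circ> h1) \<circ> a1 \<in> U z" using H_normU 1 2 U_comp by blast
  moreover have "h2 \<circ> h1 \<in> H" using H_comp 1 2 by blast
  moreover have "b2 \<circ> b1 = (h2 \<circ> h1) \<circ> ((inv h1 \<circ> a2 \<circ> h1) \<circ> a1)"
    using 1 2 H_bij[OF 1(2)] by (simp add: fun_eq_iff bij_inv_r)
  ultimately show ?thesis unfolding inB_def by blast
qed
lemma B_U: assumes "a \<in> U z" shows "inB a"
proof -
  have "a = id \<circ> a" by simp
  then show ?thesis using assms H_id unfolding inB_def by blast
qed
lemma B_Hel: assumes "h \<in> H" shows "inB h"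
proof -
  have "h = h \<circ> id" by simp
  then show ?thesis using assms U_id unfolding inB_def by blast
qed
lemma B_id: "inB id" using B_U U_id by blast
lemma B_H: "h \<in> H \<Longrightarrow> inB b \<Longrightarrow> inB (h \<circ> b)" using B_comp B_Hel by blast
lemma B_G: "inB b \<Longrightarrow> b \<in> G" unfolding inB_def using H_G G_U G_comp by blast
lemma B_fix: "inB b \<Longrightarrow> b z = z" unfolding inB_def by (auto simp: H_fix U_fix)

lemma S_B: assumes "inS s" "inB b" shows "inS (s \<circ> b)"
  using assms(1) unfolding inS_def
proof
  assume "S1 s"
  then obtain b0 v where bv: "inB b0" "v \<in> U i" "s = v \<circ> b0" unfolding S1_def by blast
  have "inB (b0 \<circ> b)" using B_comp[OF assms(2) bv(1)] .
  moreover have "s \<circ> b = v \<circ> (b0 \<circ> b)" using bv(3) by (simp add: comp_assoc)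
  ultimately show "S1 (s \<circ> b) \<or> S2 (s \<circ> b)" using bv(2) unfolding S1_def by blast
next
  assume "S2 s"
  then obtain b0 w where bw: "inB b0" "w \<in> Ucirc E U z" "s = w \<circ> \<tau> \<circ> b0" unfolding S2_def by blast
  have "inB (b0 \<circ> b)" using B_comp[OF assms(2) bw(1)] .
  moreover have "s \<circ> b = w \<circ> \<tau> \<circ> (b0 \<circ> b)" using bw(3) by (simp add: comp_assoc)
  ultimately show "S1 (s \<circ> b) \<or> S2 (s \<circ> b)" using bw(2) unfolding S2_def by blast
qed

lemma cls_eq: "E a b \<Longrightarrow> cls E a = cls E b" unfolding cls_def using Esym Etrans by blast
lemma cls_img: assumes "u \<in> U x" shows "u ` cls E y = cls E (u y)"
proof -
  have b: "bij u" using U_bij assms by blast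
  show ?thesis unfolding cls_def
  proof (intro set_eqI iffI)
    fix s assume "s \<in> u ` {t. E y t}" then show "s \<in> {t. E (u y) t}" using U_E[OF assms] by auto
  next
    fix s assume "s \<in> {t. E (u y) t}"
    then have "E (u y) (u (inv u s))" using b by (simp add: bij_inv_r)
    then have "E y (inv u s)" using U_E[OF assms] by blast
    then show "s \<in> u ` {t. E y t}" using b by (auto intro!: image_eqI[of _ _ "inv u s"] simp: bij_inv_r)
  qed
qed

lemma Uc_intro: assumes "w \<in> U z" "E (w i) i" shows "w \<in> Ucirc E U z"
proof -
  have c1: "cls E i \<in> classes E" unfolding classes_def by blast
  have c2: "cls E i \<noteq> cls E z" using nzi unfolding cls_def by auto
  have "ind E w (cls E i) = cls E i" using c1 cls_img[OF assms(1)] cls_eq[OF assms(2)] by (simp add: ind_def)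
  moreover have "ind E id (cls E i) = cls E i" using c1 by (simp add: ind_def)
  moreover have "ind E w \<in> ind E ` U z" "ind E id \<in> ind E ` U z" using assms by auto
  ultimately have "ind E w = ind E id" using LM1'[of z] c1 c2 by metis
  moreover have "ind E id = id" by (auto simp: ind_def fun_eq_iff)
  ultimately show ?thesis using assms by (simp add: Ucirc_def)
qed
lemma Uc_U: "w \<in> Ucirc E U z \<Longrightarrow> w \<in> U z" by (simp add: Ucirc_def)

lemma inv_tau_i: "inv \<tau> i = z" using tau_z tau_bij bij_inv_l by metis
lemma inv_tau_z: "inv \<tau> z = i" using tau_i tau_bij bij_inv_l by metis

lemma tau_S: assumes "inS s" shows "inS (\<tau> \<circ> s)"
proof -
  have tb: "bij \<tau>" by (rule tau_bij)
  have key: "inS (\<tau> \<circ> v)" if v: "v \<in> U i" for v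
  proof (cases "E (v z) z")
    case True
    define w where "w = \<tau> \<circ> v \<circ> inv \<tau>"
    have wU: "w \<in> U z" using conjU2[OF tau_G tau_i v] w_def by simp
    have "w i = \<tau> (v z)" using inv_tau_i by (simp add: w_def)
    moreover have "E (\<tau> (v z)) (\<tau> z)" using G_E[OF tau_G] True by blast
    ultimately have "E (w i) i" using tau_z by simp
    hence "w \<in> Ucirc E U z" using Uc_intro wU by blast
    moreover have "\<tau> \<circ> v = w \<circ> \<tau> \<circ> id" using tb by (simp add: w_def fun_eq_iff bij_inv_l)
    ultimately show ?thesis using B_id unfolding inS_def S2_def by blast
  next
    case False
    define x where "x = v z"
    have F: "\<not> E x z" using False x_def by simp
    obtain a b where ab: "a \<in> U z" "b \<in> U z" "v = b \<circ> \<mu> x \<circ> a" using mu_dec[OF v x_def[symmetric] F] by blast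
    have "\<not> E x i" using U_E[OF v, of z i] U_fix[OF v] nzi x_def by simp
    hence u: "uni x" using F by (simp add: is_unit_def)
    define hd where "hd = inv \<tau> \<circ> \<mu> x"
    have hd: "hd \<in> H" using tau_mu_H[OF u] hd_def by simp
    have "\<tau> \<circ> v = (\<tau> \<circ> b \<circ> inv \<tau>) \<circ> ((\<tau> \<circ> \<tau> \<circ> hd) \<circ> a)"
      using tb ab(3) by (simp add: hd_def fun_eq_iff bij_inv_l bij_inv_r)
    moreover have "\<tau> \<circ> b \<circ> inv \<tau> \<in> U i" using conjU2[OF tau_G tau_z ab(2)] .
    moreover have "inB ((\<tau> \<circ> \<tau> \<circ> hd) \<circ> a)" using H_comp[OF hd tau_sq] ab(1) unfolding inB_def by blast
    ultimately show ?thesis unfolding inS_def S1_def by blast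
  qed
  show ?thesis using assms unfolding inS_def
  proof
    assume "S1 s"
    then obtain b v where bv: "inB b" "v \<in> U i" "s = v \<circ> b" unfolding S1_def by blast
    have "\<tau> \<circ> s = (\<tau> \<circ> v) \<circ> b" using bv by (simp add: comp_assoc)
    then show "S1 (\<tau> \<circ> s) \<or> S2 (\<tau> \<circ> s)" using S_B key bv unfolding inS_def by metis
  next
    assume "S2 s"
    then obtain b w where bw: "inB b" "w \<in> Ucirc E U z" "s = w \<circ> \<tau> \<circ> b" unfolding S2_def by blast
    have "\<tau> \<circ> s = (\<tau> \<circ> w \<circ> inv \<tau>) \<circ> ((\<tau> \<circ> \<tau>) \<circ> b)"
      using bw tb by (simp add: fun_eq_iff bij_inv_l)
    moreover have "\<tau> \<circ> w \<circ> inv \<tau> \<in> U i" using conjU2[OF tau_G tau_z Uc_U[OF bw(2)]] .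
    moreover have "inB ((\<tau> \<circ> \<tau>) \<circ> b)" using B_H tau_sq bw by blast
    ultimately show "S1 (\<tau> \<circ> s) \<or> S2 (\<tau> \<circ> s)" unfolding S1_def by blast
  qed
qed

lemma U_tau: assumes "a \<in> U z" shows "inS (a \<circ> \<tau>)"
proof -
  define v where "v = inv \<tau> \<circ> a \<circ> \<tau>"
  have v: "v \<in> U i" using conjU3[OF tau_G tau_i assms] v_def by simp
  have "inS v" using v B_id unfolding inS_def S1_def by fastforce
  moreover have "a \<circ> \<tau> = \<tau> \<circ> v" using tau_bij by (simp add: v_def fun_eq_iff bij_inv_r)
  ultimately show ?thesis using tau_S by simp
qed

lemma C1: assumes a: "a \<in> U z" and v: "v \<in> U i" and nE: "\<not> E (v z) z" shows "inS (a \<circ> v)"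
proof -
  define x where "x = v z"
  have F: "\<not> E x z" using nE x_def by simp
  obtain a0 b where ab: "a0 \<in> U z" "b \<in> U z" "v = b \<circ> \<mu> x \<circ> a0" using mu_dec[OF v x_def[symmetric] F] by blast
  have "\<not> E x i" using U_E[OF v, of z i] U_fix[OF v] nzi x_def by simp
  hence u: "uni x" using F by (simp add: is_unit_def)
  define hd where "hd = inv \<tau> \<circ> \<mu> x"
  have hd: "hd \<in> H" using tau_mu_H[OF u] hd_def by simp
  have "a \<circ> v = ((a \<circ> b) \<circ> \<tau>) \<circ> (hd \<circ> a0)"
    using ab(3) tau_bij by (simp add: hd_def fun_eq_iff bij_inv_r)
  moreover have "inS ((a \<circ> b) \<circ> \<tau>)" using U_tau U_comp a ab(2) by blast
  moreover have "inB (hd \<circ> a0)" using hd ab(1) unfolding inB_def by blast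
  ultimately show ?thesis using S_B by simp
qed

lemma Lp: assumes u: "u \<in> U z" and v: "v \<in> U i" and vz: "E (v z) z" and ui: "\<not> E (inv u i) i"
  shows "S1 (u \<circ> v)"
proof -
  define bp where "bp = inv u i"
  have ub: "bij u" using u U_bij by blast
  have ubp: "u bp = i" using ub bp_def bij_inv_r by metis
  have bpz: "\<not> E bp z" proof
    assume "E bp z" then have "E (u bp) (u z)" using U_E[OF u] by blast
    then show False using ubp U_fix[OF u] nzi Esym by metis
  qed
  have bpi: "\<not> E bp i" using ui bp_def by simp
  have ubpu: "uni bp" using bpz bpi by (simp add: is_unit_def)
  obtain p q where pq: "p \<in> U z" "q \<in> U z" "\<mu> bp = q \<circ> \<alpha> bp \<circ> p" "\<mu> bp z = i"
    using mu_ex[OF ubpu] by blast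
  define Ab where "Ab = \<alpha> bp"
  have Ab: "Ab \<in> U i" "Ab z = bp" using alpha_spec[OF bpi] Ab_def by auto
  have Abb: "bij Ab" using Ab U_bij by blast
  have "q bp = i" using pq Ab U_fix[OF pq(1)] Ab_def by simp
  have zbp: "\<not> E z bp" using bpz Esym by blast
  have qu: "q = u" using U_uniq[OF zbp pq(2) u] \<open>q bp = i\<close> ubp by simp
  have pb: "bij p" using pq U_bij by blast
  have eq1: "\<mu> bp (inv p y) = u (Ab y)" for y using pq(3) qu pb Ab_def by (simp add: bij_inv_r)
  define Ae where "Ae = inv Ab \<circ> v"
  have Ae: "Ae \<in> U i" using Ae_def U_comp U_inv Ab v by blast
  define e' where "e' = Ae z"
  have e'z: "\<not> E e' z" proof
    assume "E e' z" then have "E (Ab e') (Ab z)" using U_E[OF Ab(1)] by blast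
    moreover have "Ab e' = v z" using Abb by (simp add: e'_def Ae_def bij_inv_r)
    ultimately have "E (v z) bp" using Ab by simp
    then have "E bp z" using vz Esym Etrans by blast
    then show False using bpz by blast
  qed
  obtain p' q' where pq': "p' \<in> U z" "q' \<in> U z" "Ae = q' \<circ> \<mu> e' \<circ> p'"
    using mu_dec[OF Ae e'_def[symmetric] e'z] by blast
  have "\<not> E e' i" using U_E[OF Ae, of z i] U_fix[OF Ae] nzi e'_def by simp
  hence ue': "uni e'" using e'z by (simp add: is_unit_def)
  define r where "r = inv p \<circ> q'"
  have r: "r \<in> U z" using r_def U_comp U_inv pq pq' by blast
  have mb: "bij (\<mu> bp)" using mu_bij ubpu by blast
  have vAb: "v = Ab \<circ> Ae" using Abb by (simp add: Ae_def fun_eq_iff bij_inv_r)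
  have "u \<circ> v = (\<mu> bp \<circ> r \<circ> inv (\<mu> bp)) \<circ> ((\<mu> bp \<circ> \<mu> e') \<circ> p')"
  proof
    fix t
    have "(u \<circ> v) t = u (Ab (q' (\<mu> e' (p' t))))" using vAb pq'(3) by simp
    also have "\<dots> = \<mu> bp (inv p (q' (\<mu> e' (p' t))))" using eq1 by simp
    also have "\<dots> = ((\<mu> bp \<circ> r \<circ> inv (\<mu> bp)) \<circ> ((\<mu> bp \<circ> \<mu> e') \<circ> p')) t"
      using mb by (simp add: r_def bij_inv_l)
    finally show "(u \<circ> v) t = ((\<mu> bp \<circ> r \<circ> inv (\<mu> bp)) \<circ> ((\<mu> bp \<circ> \<mu> e') \<circ> p')) t" .
  qed
  moreover have "\<mu> bp \<circ> r \<circ> inv (\<mu> bp) \<in> U i" using conjU2[OF mu_G[OF ubpu] pq(4) r] .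
  moreover have "inB ((\<mu> bp \<circ> \<mu> e') \<circ> p')" using H_gen[OF ue' ubpu] pq'(1) unfolding inB_def by blast
  ultimately show ?thesis unfolding S1_def by blast
qed

lemma C2: assumes a: "a \<in> U z" and v: "v \<in> U i" shows "inS (a \<circ> v)"
proof (cases "E (v z) z")
  case False then show ?thesis using C1 a v by blast
next
  case vz: True
  show ?thesis
  proof (cases "E (inv a i) i")
    case False then show ?thesis using Lp[OF a v vz] unfolding inS_def by blast
  next
    case ai: True
    have ez: "\<not> E z e" using unite Esym by (auto simp: is_unit_def)
    have ei: "\<not> E e i" using unite by (auto simp: is_unit_def)
    obtain u1 where u1: "u1 \<in> U z" "u1 i = e" using U_tr[OF nzi ez] by blast
    have u1b: "bij u1" using u1 U_bij by blast
    have iu1: "inv u1 \<in> U z" using U_inv u1 by blast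
    have "\<not> E (inv (inv u1) i) i" using u1b ei u1 by (simp add: inv_inv_eq)
    then have "S1 (inv u1 \<circ> v)" using Lp[OF iu1 v vz] by blast
    then obtain b0 v' where bv: "inB b0" "v' \<in> U i" "inv u1 \<circ> v = v' \<circ> b0" unfolding S1_def by blast
    have eq: "a \<circ> v = ((a \<circ> u1) \<circ> v') \<circ> b0"
    proof
      fix t
      have "v' (b0 t) = inv u1 (v t)" using bv(3) by (metis comp_apply)
      then show "(a \<circ> v) t = (((a \<circ> u1) \<circ> v') \<circ> b0) t" using u1b by (simp add: bij_inv_r)
    qed
    have au1: "a \<circ> u1 \<in> U z" using U_comp a u1 by blast
    have "inS ((a \<circ> u1) \<circ> v')"
    proof (cases "E (v' z) z")
      case False then show ?thesis using C1 au1 bv by blast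
    next
      case True
      have ab: "bij a" using a U_bij by blast
      have "E (inv u1 (inv a i)) (inv u1 i)" using U_E[OF iu1] ai by blast
      moreover have "\<not> E (inv u1 i) i"
      proof
        assume "E (inv u1 i) i"
        then have "E (u1 (inv u1 i)) (u1 i)" using U_E[OF u1(1)] by blast
        then show False using u1b u1 ei Esym by (metis bij_inv_r)
      qed
      ultimately have "\<not> E (inv u1 (inv a i)) i" using Etrans Esym by blast
      moreover have "inv (a \<circ> u1) = inv u1 \<circ> inv a" using ab u1b by (simp add: o_inv_distrib)
      ultimately have "\<not> E (inv (a \<circ> u1) i) i" by simp
      then show ?thesis using Lp[OF au1 bv(2) True] unfolding inS_def by blast
    qed
    then show ?thesis using eq S_B bv by simp
  qed
qed

lemma A_lem: assumes v: "v \<in> U i" and s: "inS s" shows "inS (v \<circ> s)"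
  using s unfolding inS_def
proof
  assume "S1 s"
  then obtain b v0 where bv: "inB b" "v0 \<in> U i" "s = v0 \<circ> b" unfolding S1_def by blast
  have "v \<circ> s = (v \<circ> v0) \<circ> b" using bv by (simp add: comp_assoc)
  then show "S1 (v \<circ> s) \<or> S2 (v \<circ> s)" using U_comp v bv unfolding S1_def by blast
next
  assume "S2 s"
  then obtain b w where bw: "inB b" "w \<in> Ucirc E U z" "s = w \<circ> \<tau> \<circ> b" unfolding S2_def by blast
  define w' where "w' = inv \<tau> \<circ> w \<circ> \<tau>"
  define u' where "u' = inv \<tau> \<circ> v \<circ> \<tau>"
  have w': "w' \<in> U i" using conjU3[OF tau_G tau_i Uc_U[OF bw(2)]] w'_def by simp
  have u': "u' \<in> U z" using conjU3[OF tau_G tau_z v] u'_def by simp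
  have "v \<circ> s = (\<tau> \<circ> (u' \<circ> w')) \<circ> b" using tau_bij bw(3) by (simp add: u'_def w'_def fun_eq_iff bij_inv_r)
  moreover have "inS (\<tau> \<circ> (u' \<circ> w'))" using tau_S C2 u' w' by blast
  ultimately show "S1 (v \<circ> s) \<or> S2 (v \<circ> s)" using S_B bw(1) unfolding inS_def by metis
qed

lemma B_lem: assumes a: "a \<in> U z" and s: "inS s" shows "inS (a \<circ> s)"
  using s unfolding inS_def
proof
  assume "S1 s"
  then obtain b v0 where bv: "inB b" "v0 \<in> U i" "s = v0 \<circ> b" unfolding S1_def by blast
  have "a \<circ> s = (a \<circ> v0) \<circ> b" using bv by (simp add: comp_assoc)
  then show "S1 (a \<circ> s) \<or> S2 (a \<circ> s)" using C2 a bv S_B unfolding inS_def by metis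
next
  assume "S2 s"
  then obtain b w where bw: "inB b" "w \<in> Ucirc E U z" "s = w \<circ> \<tau> \<circ> b" unfolding S2_def by blast
  have "a \<circ> s = ((a \<circ> w) \<circ> \<tau>) \<circ> b" using bw by (simp add: comp_assoc)
  moreover have "inS ((a \<circ> w) \<circ> \<tau>)" using U_tau U_comp a Uc_U[OF bw(2)] by blast
  ultimately show "S1 (a \<circ> s) \<or> S2 (a \<circ> s)" using S_B bw(1) unfolding inS_def by metis
qed

lemma Ux_lem: assumes t: "t \<in> U x" and s: "inS s" shows "inS (t \<circ> s)"
proof (cases "E x i")
  case False
  define A where "A = \<alpha> x"
  have A: "A \<in> U i" "A z = x" using alpha_spec[OF False] A_def by auto
  have Ab: "bij A" using A U_bij by blast
  define u where "u = inv A \<circ> t \<circ> A"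
  have u: "u \<in> U z" using conjU3[OF G_U[OF A(1)] A(2) t] u_def by simp
  have "t \<circ> s = A \<circ> (u \<circ> (inv A \<circ> s))" using Ab by (simp add: u_def fun_eq_iff bij_inv_r)
  moreover have "inS (A \<circ> (u \<circ> (inv A \<circ> s)))"
    using A_lem[OF A(1) B_lem[OF u A_lem[OF U_inv[OF A(1)] s]]] .
  ultimately show ?thesis by simp
next
  case True
  have zx: "\<not> E z x" using True nzi Etrans by blast
  obtain B where B: "B \<in> U z" "B i = x" using U_tr[OF nzi zx] by blast
  have Bb: "bij B" using B U_bij by blast
  define u where "u = inv B \<circ> t \<circ> B"
  have u: "u \<in> U i" using conjU3[OF G_U[OF B(1)] B(2) t] u_def by simp
  have "t \<circ> s = B \<circ> (u \<circ> (inv B \<circ> s))" using Bb by (simp add: u_def fun_eq_iff bij_inv_r)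
  moreover have "inS (B \<circ> (u \<circ> (inv B \<circ> s)))"
    using B_lem[OF B(1) A_lem[OF u B_lem[OF U_inv[OF B(1)] s]]] .
  ultimately show ?thesis by simp
qed

lemma G_S': assumes "g \<in> G" shows "\<forall>s. inS s \<longrightarrow> inS (g \<circ> s)"
  using assms unfolding littleG_def
proof induct
  case gen_id then show ?case by simp
next
  case (gen_elem g) then show ?case using Ux_lem by blast
next
  case (gen_inv g) then show ?case using Ux_lem U_inv by blast
next
  case (gen_mul g h) then show ?case by (simp add: pmul_def comp_assoc)
qed

lemma inS_id: "inS id" using B_id U_id unfolding inS_def S1_def by fastforce

lemma G_eq: "G = {g. inS g}"
proof (intro set_eqI iffI)
  fix g assume "g \<in> G" then show "g \<in> {g. inS g}" using G_S' inS_id by fastforce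
next
  fix g assume "g \<in> {g. inS g}"
  then have "S1 g \<or> S2 g" unfolding inS_def by simp
  then show "g \<in> G"
  proof
    assume "S1 g"
    then obtain b v where bv: "inB b" "v \<in> U i" "g = v \<circ> b" unfolding S1_def by blast
    show "g \<in> G" using G_comp[OF B_G[OF bv(1)] G_U[OF bv(2)]] bv(3) by simp
  next
    assume "S2 g"
    then obtain b w where bw: "inB b" "w \<in> Ucirc E U z" "g = w \<circ> \<tau> \<circ> b" unfolding S2_def by blast
    have "w \<circ> \<tau> \<in> G" using G_comp[OF tau_G G_U[OF Uc_U[OF bw(2)]]] .
    then show "g \<in> G" using G_comp[OF B_G[OF bw(1)]] bw(3) by simp
  qed
qed

lemma stab0: "{g \<in> G. g z = z} = {g. inB g}"
proof (intro set_eqI iffI)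
  fix g assume g: "g \<in> {g \<in> G. g z = z}"
  then have "inS g" using G_eq by blast
  moreover have "\<not> S2 g"
  proof
    assume "S2 g"
    then obtain b w where bw: "inB b" "w \<in> Ucirc E U z" "g = w \<circ> \<tau> \<circ> b" unfolding S2_def by blast
    have w: "w \<in> U z" using Uc_U bw by blast
    have "g z = w i" using bw(3) B_fix[OF bw(1)] tau_z by simp
    moreover have "g z = z" using g by simp
    ultimately have "w i = w z" using U_fix[OF w] by simp
    then have "i = z" using w U_bij bij_is_inj by (metis injD)
    then show False using nzi by simp
  qed
  ultimately obtain b v where bv: "inB b" "v \<in> U i" "g = v \<circ> b" unfolding inS_def S1_def by blast
  have "v z = id z" using g bv B_fix[OF bv(1)] by simp
  then have "v = id" using U_uniq[OF iz bv(2) U_id] by simp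
  then show "g \<in> {g. inB g}" using bv by simp
next
  fix g assume "g \<in> {g. inB g}"
  then show "g \<in> {g \<in> G. g z = z}" using B_G B_fix by blast
qed

lemma stab0i: "{g \<in> G. g z = z \<and> g i = i} = H"
proof (intro set_eqI iffI)
  fix g assume g: "g \<in> {g \<in> G. g z = z \<and> g i = i}"
  then have "inB g" using stab0 by blast
  then obtain a h where ah: "a \<in> U z" "h \<in> H" "g = h \<circ> a" unfolding inB_def by blast
  have "h (a i) = h i" using g ah H_fix[OF ah(2)] by simp
  then have "a i = id i" using H_bij[OF ah(2)] bij_is_inj by (metis injD id_apply)
  then have "a = id" using U_uniq[OF nzi ah(1) U_id] by simp
  then show "g \<in> H" using ah by simp
next
  fix g assume "g \<in> H" then show "g \<in> {g \<in> G. g z = z \<and> g i = i}" using H_G H_fix by blast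
qed

lemma setB: "setmul (U z) H = {g. inB g}"
  by (rule set_eqI) (unfold setmul_iff inB_def mem_Collect_eq, blast)
lemma setS1: "setmul (setmul (U z) H) (U i) = {g. S1 g}"
  unfolding setB S1_def by (rule set_eqI) (unfold setmul_iff mem_Collect_eq, blast)
lemma setS2: "setmul (setmul (setmul (U z) H) {\<tau>}) (Ucirc E U z) = {g. S2 g}"
proof (intro set_eqI iffI)
  fix g assume "g \<in> setmul (setmul (setmul (U z) H) {\<tau>}) (Ucirc E U z)"
  then obtain c w where cw: "c \<in> setmul (setmul (U z) H) {\<tau>}" "w \<in> Ucirc E U z" "g = w \<circ> c"
    unfolding setmul_iff[of g] by blast
  then obtain b where b: "b \<in> setmul (U z) H" "c = \<tau> \<circ> b" unfolding setmul_iff[of c] by blast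
  have "inB b" using b(1) setB by blast
  moreover have "g = w \<circ> \<tau> \<circ> b" using cw b by (simp add: comp_assoc)
  ultimately show "g \<in> {g. S2 g}" using cw(2) unfolding S2_def by blast
next
  fix g assume "g \<in> {g. S2 g}"
  then obtain b w where bw: "inB b" "w \<in> Ucirc E U z" "g = w \<circ> \<tau> \<circ> b" unfolding S2_def by blast
  have "b \<in> setmul (U z) H" using bw(1) setB by blast
  then have c: "\<tau> \<circ> b \<in> setmul (setmul (U z) H) {\<tau>}" unfolding setmul_iff[of "\<tau> \<circ> b"] by blast
  have "g = w \<circ> (\<tau> \<circ> b)" using bw by (simp add: comp_assoc)
  then show "g \<in> setmul (setmul (setmul (U z) H) {\<tau>}) (Ucirc E U z)"
    unfolding setmul_iff[of g] using c bw(2) by blast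
qed

end

theorem mainTheorem6:
  fixes E :: "'a \<Rightarrow> 'a \<Rightarrow> bool" and U :: "'a \<Rightarrow> ('a \<Rightarrow> 'a) set"
    and zero infty e :: 'a
  assumes "local_moufang_set E U"
    and "\<not> E zero infty"
    and "is_unit E zero infty e"
  defines "\<tau> \<equiv> mu U zero infty e"
  shows "(littleG U =
           setmul (setmul (U zero) (Hua E U zero infty)) (U infty)
         \<union> setmul (setmul (setmul (U zero) (Hua E U zero infty)) {\<tau>}) (Ucirc E U zero))
       \<and> {g \<in> littleG U. g zero = zero} = setmul (U zero) (Hua E U zero infty)
       \<and> {g \<in> littleG U. g zero = zero \<and> g infty = infty} = Hua E U zero infty"
proof -
  interpret L: LMS E U zero infty e using assms(1-3) by unfold_locales
  have "littleG U = {g. L.S1 g} \<union> {g. L.S2 g}" using L.G_eq unfolding L.inS_def by auto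
  then have 1: "littleG U =
           setmul (setmul (U zero) (Hua E U zero infty)) (U infty)
         \<union> setmul (setmul (setmul (U zero) (Hua E U zero infty)) {\<tau>}) (Ucirc E U zero)"
    unfolding \<tau>_def by (simp only: L.setS1[symmetric] L.setS2[symmetric])
  have 2: "{g \<in> littleG U. g zero = zero} = setmul (U zero) (Hua E U zero infty)"
    using L.stab0 L.setB by simp
  show ?thesis using 1 2 L.stab0i by simp
qed

end
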